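(* Let $s>0$ and $0<\epsilon<\min\{2s,1\}$. Then there exist $\sigma\in(0,1)$ and $C>0$ such that for all $u_1,u_2,u_3\in H^s(\mathbb{R})$, $\|T_\sigma(u_1,u_2,u_3)\|_{H^{s+\epsilon}}\le C\prod_{j=1}^3\|u_j\|_{H^s}$.
   Context: (Setting of the cubic NLS.) $\langle a\rangle=(1+|a|^2)^{1/2}$; $\Xi=(\xi,\xi_1,\xi_2,\xi_3)$, $\Phi(\Xi)=(\xi-\xi_1)(\xi-\xi_3)$, $m(\Xi)=1$, and $\mathcal{F}[T_\sigma(u_1,u_2,u_3)](\xi)=\int_{\xi_1+\xi_2+\xi_3=\xi}\langle\Phi(\Xi)\rangle^{-\sigma}\hat u_1(\xi_1)\hat u_2(\xi_2)\hat u_3(\xi_3)\,d\xi_1d\xi_3$. *)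

theory Defs
  imports "HOL-Analysis.Analysis"
begin

definition jbr :: "real \<Rightarrow> real" where
  "jbr a = sqrt (1 + a\<^sup>2)"

definition Phi :: "real \<Rightarrow> real \<Rightarrow> real \<Rightarrow> real \<Rightarrow> real" where
  "Phi \<xi> \<xi>1 \<xi>2 \<xi>3 = (\<xi> - \<xi>1) * (\<xi> - \<xi>3)"

text \<open>Sobolev spaces on the Fourier side: a function u is in H^s iff its Fourier
  transform f = hat u is measurable with  int <xi>^(2s) |f(xi)|^2 dxi < infinity;
  the H^s norm is  (int <xi>^(2s) |f(xi)|^2 dxi)^(1/2).\<close>
definition Hs_space :: "real \<Rightarrow> (real \<Rightarrow> complex) \<Rightarrow> bool" where
  "Hs_space s f \<longleftrightarrow> f \<in> borel_measurable lborel \<and>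
     integrable lborel (\<lambda>\<xi>. jbr \<xi> powr (2 * s) * (cmod (f \<xi>))\<^sup>2)"

definition Hs_norm :: "real \<Rightarrow> (real \<Rightarrow> complex) \<Rightarrow> real" where
  "Hs_norm s f = sqrt (\<integral>\<xi>. jbr \<xi> powr (2 * s) * (cmod (f \<xi>))\<^sup>2 \<partial>lborel)"

text \<open>Integrand of F[T_sigma(u1,u2,u3)](xi) in the variables (xi1, xi3), with xi2 = xi - xi1 - xi3.\<close>
definition T_integrand ::
  "real \<Rightarrow> (real \<Rightarrow> complex) \<Rightarrow> (real \<Rightarrow> complex) \<Rightarrow> (real \<Rightarrow> complex) \<Rightarrow> real \<Rightarrow> real \<times> real \<Rightarrow> complex" where
  "T_integrand \<sigma> f1 f2 f3 \<xi> = (\<lambda>(\<xi>1, \<xi>3).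
      complex_of_real (jbr (Phi \<xi> \<xi>1 (\<xi> - \<xi>1 - \<xi>3) \<xi>3) powr (- \<sigma>))
      * f1 \<xi>1 * f2 (\<xi> - \<xi>1 - \<xi>3) * f3 \<xi>3)"

text \<open>Fourier transform of T_sigma(u1,u2,u3), given f_j = hat u_j.\<close>
definition T_hat ::
  "real \<Rightarrow> (real \<Rightarrow> complex) \<Rightarrow> (real \<Rightarrow> complex) \<Rightarrow> (real \<Rightarrow> complex) \<Rightarrow> real \<Rightarrow> complex" where
  "T_hat \<sigma> f1 f2 f3 \<xi> = (\<integral>p. T_integrand \<sigma> f1 f2 f3 \<xi> p \<partial>(lborel :: (real \<times> real) measure))"

end

theory Submission
  imports Defs
begin


lemma jbr_ge1: "1 \<le> jbr t"
  unfolding jbr_def by simp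
lemma jbr_pos: "0 < jbr t"
  using jbr_ge1[of t] by linarith
lemma abs_le_jbr: "\<bar>t\<bar> \<le> jbr t"
  unfolding jbr_def by (rule real_le_rsqrt) simp
lemma jbr_minus: "jbr (- t) = jbr t"
  unfolding jbr_def by simp
lemma jbr_add: "jbr (u + v) \<le> jbr u + jbr v"
proof -
  have "jbr (u+v) = norm ((1::real, u) + (0, v))"
    unfolding jbr_def by (simp add: norm_Pair)
  also have "\<dots> \<le> norm (1::real, u) + norm (0::real, v)" by (rule norm_triangle_ineq)
  also have "\<dots> \<le> jbr u + jbr v"
    using abs_le_jbr[of v] unfolding jbr_def by (simp add: norm_Pair)
  finally show ?thesis .
qed
lemma sum_le_2prod: "1 \<le> (p::real) \<Longrightarrow> 1 \<le> q \<Longrightarrow> p + q \<le> 2 * p * q"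
proof -
  assume a: "1 \<le> p" "1 \<le> q"
  have "(p - 1) * (q - 1) \<ge> 0" using a by simp
  moreover have "p * q \<ge> 1" using a mult_mono[of 1 p 1 q] by simp
  ultimately show ?thesis by (simp add: algebra_simps)
qed

lemma powr_sq: "0 < (X::real) \<Longrightarrow> (X ^ 2) powr a = X powr (2*a)"
proof -
  assume X: "0 < X"
  have e: "X ^ 2 = X powr 2" using X by (simp add: powr_numeral)
  have "(X ^ 2) powr a = (X powr 2) powr a" by (simp only: e)
  also have "\<dots> = X powr (2*a)" by (simp only: powr_powr)
  finally show ?thesis .
qed
lemma W_abstract:
  fixes Xi P Q R m s \<epsilon> :: real
  assumes "0 < Xi" "1 \<le> P" "1 \<le> Q" "1 \<le> R" "1 \<le> m" "Xi \<le> 3 * P" "Xi\<^sup>2 \<le> 6 * m\<^sup>2 * Q * R"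
    "0 \<le> s" "0 \<le> \<epsilon>" "\<epsilon> \<le> 2 * s"
  shows "Xi powr (s + \<epsilon>) \<le> 3 powr s * 6 powr (\<epsilon>/2) * m powr \<epsilon> * (P powr s * Q powr s * R powr s)"
proof -
  have "Xi powr (s + \<epsilon>) = Xi powr s * Xi powr \<epsilon>" by (rule powr_add)
  also have "Xi powr \<epsilon> = (Xi\<^sup>2) powr (\<epsilon>/2)" using powr_sq[OF assms(1), of "\<epsilon>/2"] by simp
  also have "Xi powr s * (Xi\<^sup>2) powr (\<epsilon>/2) \<le> (3 * P) powr s * (6 * m\<^sup>2 * Q * R) powr (\<epsilon>/2)"
  proof (rule mult_mono)
    show "Xi powr s \<le> (3 * P) powr s" by (rule powr_mono2) (use assms in auto)
    show "(Xi\<^sup>2) powr (\<epsilon>/2) \<le> (6 * m\<^sup>2 * Q * R) powr (\<epsilon>/2)" by (rule powr_mono2) (use assms in auto)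
  qed auto
  also have "(6 * m\<^sup>2 * Q * R) powr (\<epsilon>/2) = 6 powr (\<epsilon>/2) * (m\<^sup>2) powr (\<epsilon>/2) * Q powr (\<epsilon>/2) * R powr (\<epsilon>/2)"
    using assms by (simp add: powr_mult)
  also have "(m\<^sup>2) powr (\<epsilon>/2) = m powr \<epsilon>" using powr_sq[of m "\<epsilon>/2"] assms by simp
  also have "(3 * P) powr s = 3 powr s * P powr s" using assms by (simp add: powr_mult)
  also have "3 powr s * P powr s * (6 powr (\<epsilon> / 2) * m powr \<epsilon> * Q powr (\<epsilon> / 2) * R powr (\<epsilon> / 2))
      = (3 powr s * 6 powr (\<epsilon>/2) * m powr \<epsilon>) * (P powr s * (Q powr (\<epsilon> / 2) * R powr (\<epsilon> / 2)))"
    by (simp add: mult_ac)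
  also have "\<dots> \<le> (3 powr s * 6 powr (\<epsilon>/2) * m powr \<epsilon>) * (P powr s * (Q powr s * R powr s))"
  proof (rule mult_left_mono)
    have "Q powr (\<epsilon> / 2) \<le> Q powr s" by (rule powr_mono) (use assms in auto)
    moreover have "R powr (\<epsilon> / 2) \<le> R powr s" by (rule powr_mono) (use assms in auto)
    ultimately have "Q powr (\<epsilon> / 2) * R powr (\<epsilon> / 2) \<le> Q powr s * R powr s"
      by (rule mult_mono) auto
    then show "P powr s * (Q powr (\<epsilon> / 2) * R powr (\<epsilon> / 2)) \<le> P powr s * (Q powr s * R powr s)"
      by (rule mult_left_mono) auto
  qed auto
  finally show ?thesis by (simp add: mult_ac)
qed

lemma W_bound:
  fixes x y z s \<epsilon> :: real
  assumes "0 \<le> s" "0 \<le> \<epsilon>" "\<epsilon> \<le> 2 * s"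
  shows "jbr (x + y + z) powr (s + \<epsilon>) \<le> 3 powr s * 6 powr (\<epsilon>/2) *
     (jbr (y + z) powr \<epsilon> + jbr (x + y) powr \<epsilon>) * (jbr x powr s * jbr y powr s * jbr z powr s)"
proof -
  define m where "m = max (jbr (y + z)) (jbr (x + y))"
  have m1: "1 \<le> m" using jbr_ge1 unfolding m_def by (simp add: le_max_iff_disj)
  have ma: "jbr (y+z) \<le> m" and mb: "jbr (x+y) \<le> m" unfolding m_def by auto
  note g = jbr_ge1[of x] jbr_ge1[of y] jbr_ge1[of z]
  have e1: "jbr (x+y+z) \<le> 2 * jbr x * m"
  proof -
    have "jbr (x+y+z) = jbr (x + (y+z))" by (simp add: add.assoc)
    also have "\<dots> \<le> jbr x + jbr (y+z)" by (rule jbr_add)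
    also have "\<dots> \<le> 2 * jbr x * jbr (y+z)" using g jbr_ge1 by (intro sum_le_2prod) auto
    also have "\<dots> \<le> 2 * jbr x * m" using ma g by simp
    finally show ?thesis .
  qed
  have e2: "jbr (x+y+z) \<le> 2 * jbr z * m"
  proof -
    have "jbr (x+y+z) = jbr (z + (x+y))" by (simp add: ac_simps)
    also have "\<dots> \<le> jbr z + jbr (x+y)" by (rule jbr_add)
    also have "\<dots> \<le> 2 * jbr z * jbr (x+y)" using g jbr_ge1 by (intro sum_le_2prod) auto
    also have "\<dots> \<le> 2 * jbr z * m" using mb g by simp
    finally show ?thesis .
  qed
  have e3: "jbr (x+y+z) \<le> 3 * m * jbr y"
  proof -
    have "jbr (x+y+z) = jbr ((y+z) + ((x+y) + (-y)))" by (simp add: ac_simps)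
    also have "\<dots> \<le> jbr (y+z) + (jbr (x+y) + jbr (-y))" using jbr_add
      by (meson add_left_mono order_trans)
    also have "\<dots> \<le> 2 * m + jbr y" using ma mb by (simp add: jbr_minus)
    also have "\<dots> \<le> 3 * m * jbr y"
    proof -
      have "m \<le> m * jbr y" "jbr y \<le> m * jbr y" using m1 g by (simp_all add: mult_le_cancel_left1 mult_le_cancel_right1)
      then show ?thesis by linarith
    qed
    finally show ?thesis .
  qed
  have e4: "jbr (x+y+z) \<le> 3 * jbr x \<or> jbr (x+y+z) \<le> 3 * jbr y \<or> jbr (x+y+z) \<le> 3 * jbr z"
  proof -
    have "jbr (x+y+z) \<le> jbr x + jbr y + jbr z" using jbr_add
      by (meson add_right_mono order_trans)
    then show ?thesis by linarith
  qed
  have sq: "\<And>A B C :: real. 0 \<le> A \<Longrightarrow> A \<le> B \<Longrightarrow> A \<le> C \<Longrightarrow> A\<^sup>2 \<le> B * C"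
  proof -
    fix A B C :: real assume h: "0 \<le> A" "A \<le> B" "A \<le> C"
    then have "A * A \<le> B * C" by (intro mult_mono) auto
    then show "A\<^sup>2 \<le> B * C" by (simp add: power2_eq_square)
  qed
  have P1: "(jbr (x+y+z))\<^sup>2 \<le> 6 * m\<^sup>2 * jbr y * jbr z"
    using sq[OF _ e2 e3] jbr_pos[of "x+y+z"] by (simp add: power2_eq_square mult_ac)
  have P2: "(jbr (x+y+z))\<^sup>2 \<le> 6 * m\<^sup>2 * jbr x * jbr z"
  proof -
    have "(jbr (x+y+z))\<^sup>2 \<le> (2 * jbr x * m) * (2 * jbr z * m)"
      using sq[OF _ e1 e2] jbr_pos[of "x+y+z"] by simp
    also have "\<dots> \<le> 6 * m\<^sup>2 * jbr x * jbr z" using g m1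
      by (simp add: power2_eq_square mult_ac mult_right_mono)
    finally show ?thesis .
  qed
  have P3: "(jbr (x+y+z))\<^sup>2 \<le> 6 * m\<^sup>2 * jbr x * jbr y"
    using sq[OF _ e1 e3] jbr_pos[of "x+y+z"] by (simp add: power2_eq_square mult_ac)
  have mm: "m powr \<epsilon> \<le> jbr (y + z) powr \<epsilon> + jbr (x + y) powr \<epsilon>"
    unfolding m_def by (cases "jbr (y+z) \<le> jbr (x+y)") (auto simp: max_def)
  have main: "jbr (x + y + z) powr (s + \<epsilon>) \<le> 3 powr s * 6 powr (\<epsilon>/2) * m powr \<epsilon> *
     (jbr x powr s * jbr y powr s * jbr z powr s)"
    using e4
  proof (elim disjE)
    assume "jbr (x+y+z) \<le> 3 * jbr x"
    from W_abstract[OF jbr_pos jbr_ge1 jbr_ge1 jbr_ge1 m1 this P1 assms] show ?thesis .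
  next
    assume "jbr (x+y+z) \<le> 3 * jbr y"
    from W_abstract[OF jbr_pos jbr_ge1 jbr_ge1 jbr_ge1 m1 this P2 assms] show ?thesis
      by (simp add: mult_ac)
  next
    assume "jbr (x+y+z) \<le> 3 * jbr z"
    from W_abstract[OF jbr_pos jbr_ge1 jbr_ge1 jbr_ge1 m1 this, of x y] P3 assms show ?thesis
      by (simp add: mult_ac)
  qed
  also have "\<dots> \<le> 3 powr s * 6 powr (\<epsilon>/2) * (jbr (y + z) powr \<epsilon> + jbr (x + y) powr \<epsilon>) *
     (jbr x powr s * jbr y powr s * jbr z powr s)"
    using mm by (intro mult_right_mono mult_left_mono) auto
  finally show ?thesis .
qed



lemma aux1: "\<bar>t - d\<bar> \<ge> \<bar>t\<bar>/2 \<Longrightarrow> \<bar>t * (t - d)\<bar> \<ge> t\<^sup>2 / (2::real)"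
proof -
  assume h: "\<bar>t - d\<bar> \<ge> \<bar>t\<bar>/2"
  have "\<bar>t\<bar> * (\<bar>t\<bar>/2) \<le> \<bar>t\<bar> * \<bar>t - d\<bar>" using h by (intro mult_left_mono) auto
  then show ?thesis by (simp add: abs_mult power2_eq_square)
qed
lemma aux3: "(1 + (t::real)\<^sup>2)\<^sup>2 / 9 \<le> 1 + (t\<^sup>2/2)\<^sup>2"
proof -
  define u where "u = t\<^sup>2"
  have u0: "0 \<le> u" unfolding u_def by simp
  have "0 \<le> (u - 1)\<^sup>2" by simp
  then have "(1 + u)\<^sup>2 \<le> 9 * (1 + (u/2)\<^sup>2)" using u0 by (simp add: power2_eq_square algebra_simps)
  then show ?thesis unfolding u_def by simp
qed
lemma aux5: "(t::real) \<in> {-2..2} \<Longrightarrow> sqrt (1 + t\<^sup>2) \<le> 3"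
proof -
  assume "t \<in> {-2..2}"
  then have "\<bar>t\<bar> \<le> \<bar>2\<bar>" by auto
  then have "t\<^sup>2 \<le> 2\<^sup>2" by (simp only: abs_le_square_iff)
  then have "1 + t\<^sup>2 \<le> 3\<^sup>2" by simp
  then show ?thesis by (rule real_le_lsqrt[rotated]) auto
qed
lemma aux6: "\<bar>t\<bar> < 2 * \<bar>d\<bar> \<Longrightarrow> 1 < \<bar>d\<bar> \<Longrightarrow> sqrt (1 + t\<^sup>2) \<le> 3 * \<bar>d::real\<bar>"
proof -
  assume a: "\<bar>t\<bar> < 2 * \<bar>d\<bar>" "1 < \<bar>d\<bar>"
  have "\<bar>t\<bar> \<le> \<bar>2 * \<bar>d\<bar>\<bar>" using a by auto
  then have "t\<^sup>2 \<le> (2 * \<bar>d\<bar>)\<^sup>2" by (simp only: abs_le_square_iff)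
  moreover have "1 \<le> d\<^sup>2" using a by (metis abs_ge_self less_le one_le_power power2_abs)
  ultimately have "1 + t\<^sup>2 \<le> (3 * \<bar>d\<bar>)\<^sup>2" by (simp add: power2_eq_square)
  then show ?thesis by (rule real_le_lsqrt[rotated]) auto
qed

lemma aux7: "0 < (X::real) \<Longrightarrow> (X ^ 2 / 3) powr (-\<sigma>) * X powr \<epsilon> = 3 powr \<sigma> * X powr (\<epsilon> - 2*\<sigma>)"
proof -
  assume X: "0 < X"
  have "(X ^ 2 / 3) powr (-\<sigma>) = (X ^ 2) powr (-\<sigma>) / 3 powr (-\<sigma>)"
    by (simp add: powr_divide)
  also have "(X ^ 2) powr (-\<sigma>) = X powr (2*(-\<sigma>))" using X by (rule powr_sq)
  also have "3 powr (-\<sigma>) = 1 / 3 powr \<sigma>" by (simp add: powr_minus_divide)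
  finally have "(X ^ 2 / 3) powr (-\<sigma>) = 3 powr \<sigma> * X powr (-2*\<sigma>)" by simp
  moreover have "X powr (-2*\<sigma>) * X powr \<epsilon> = X powr (\<epsilon> - 2*\<sigma>)"
    by (simp add: powr_add[symmetric])
  ultimately show ?thesis by (simp add: mult_ac)
qed

lemma g_pointwise:
  fixes t d \<sigma> \<epsilon> :: real
  assumes s0: "0 < \<sigma>" and s1: "\<sigma> < 1" and e0: "0 \<le> \<epsilon>" and e1: "\<epsilon> < 1" and td: "t \<noteq> d"
  shows "jbr (t * (t - d)) powr (-\<sigma>) * jbr t powr \<epsilon> \<le>
    3 * jbr t powr (\<epsilon> - 2*\<sigma>) + 3 * indicator {-2..2} t +
    (if 1 < \<bar>d\<bar> then (2*\<bar>d\<bar>/3) powr (-\<sigma>) * (3*\<bar>d\<bar>) powr \<epsilon> *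
        (indicator {w. \<bar>w\<bar> < \<bar>d\<bar>} (t - d) * \<bar>t - d\<bar> powr (-\<sigma>)) else 0)"
    (is "?g \<le> ?A + ?B + ?C")
proof -
  have A0: "0 \<le> ?A" and B0: "0 \<le> ?B" and C0: "0 \<le> ?C" by auto
  show ?thesis
  proof (cases "\<bar>t - d\<bar> \<ge> \<bar>t\<bar>/2")
    case True
    have "\<bar>t * (t - d)\<bar> \<ge> t\<^sup>2 / 2" using True by (rule aux1)
    then have "(t\<^sup>2/2)\<^sup>2 \<le> \<bar>t * (t - d)\<bar>\<^sup>2" by (intro power_mono) auto
    then have h1: "(t * (t - d))\<^sup>2 \<ge> (t\<^sup>2/2)\<^sup>2" by simp
    have "(jbr t ^ 2 / 3)\<^sup>2 \<le> (jbr (t * (t - d)))\<^sup>2"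
    proof -
      have "(jbr t ^ 2 / 3)\<^sup>2 = (1 + t\<^sup>2)\<^sup>2 / 9" unfolding jbr_def by (simp add: power_divide)
      also have "\<dots> \<le> 1 + (t\<^sup>2/2)\<^sup>2" by (rule aux3)
      also have "\<dots> \<le> 1 + (t * (t - d))\<^sup>2" using h1 by simp
      also have "\<dots> = (jbr (t * (t - d)))\<^sup>2" unfolding jbr_def by simp
      finally show ?thesis .
    qed
    then have h2: "jbr t ^ 2 / 3 \<le> jbr (t * (t - d))"
      by (rule power2_le_imp_le[OF _ less_imp_le[OF jbr_pos]])
    have "?g \<le> (jbr t ^ 2 / 3) powr (-\<sigma>) * jbr t powr \<epsilon>"
      using h2 s0 jbr_pos[of t] by (intro mult_right_mono powr_mono2') auto
    also have "\<dots> = 3 powr \<sigma> * jbr t powr (\<epsilon> - 2*\<sigma>)"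
      using jbr_pos[of t] by (rule aux7)
    also have "\<dots> \<le> 3 * jbr t powr (\<epsilon> - 2*\<sigma>)"
      using s1 s0 powr_mono[of \<sigma> 1 3] by (intro mult_right_mono) auto
    finally show ?thesis using B0 C0 by linarith
  next
    case False
    then have tl: "\<bar>t\<bar> < 2 * \<bar>d\<bar>" and tg: "2 * \<bar>d\<bar> / 3 < \<bar>t\<bar>" by linarith+
    show ?thesis
    proof (cases "1 < \<bar>d\<bar>")
      case False
      then have "t \<in> {-2..2}" using tl by auto
      have "?g \<le> 1 * jbr t powr \<epsilon>"
        using jbr_ge1[of "t * (t-d)"] s0 powr_mono[of "-\<sigma>" 0 "jbr (t * (t-d))"] by (intro mult_right_mono) auto
      also have "\<dots> \<le> jbr t powr 1"
        using jbr_ge1[of t] e1 powr_mono[of \<epsilon> 1 "jbr t"] by simp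
      also have "\<dots> \<le> 3" using aux5[OF \<open>t \<in> {-2..2}\<close>] unfolding jbr_def by simp
      finally have "?g \<le> 3" .
      moreover have "?B = 3" using \<open>t \<in> {-2..2}\<close> by simp
      ultimately show ?thesis using A0 C0 by linarith
    next
      case True
      have dpos: "0 < \<bar>t - d\<bar>" using td by simp
      have in2: "\<bar>t - d\<bar> < \<bar>d\<bar>" using False tl by linarith
      have "(2*\<bar>d\<bar>/3) * \<bar>t - d\<bar> \<le> \<bar>t * (t - d)\<bar>"
        unfolding abs_mult using tg by (intro mult_right_mono) auto
      also have "\<dots> \<le> jbr (t * (t - d))" by (rule abs_le_jbr)
      finally have l1: "(2*\<bar>d\<bar>/3) * \<bar>t - d\<bar> \<le> jbr (t * (t - d))" .
      have l2: "jbr t \<le> 3 * \<bar>d\<bar>"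
        using aux6[OF tl True] unfolding jbr_def .
      have "?g \<le> ((2*\<bar>d\<bar>/3) * \<bar>t - d\<bar>) powr (-\<sigma>) * (3*\<bar>d\<bar>) powr \<epsilon>"
      proof (rule mult_mono)
        show "jbr (t * (t - d)) powr - \<sigma> \<le> ((2*\<bar>d\<bar>/3) * \<bar>t - d\<bar>) powr (-\<sigma>)"
          by (rule powr_mono2') (use l1 s0 dpos True in auto)
        show "jbr t powr \<epsilon> \<le> (3*\<bar>d\<bar>) powr \<epsilon>"
          by (rule powr_mono2) (use l2 e0 jbr_pos[of t] in auto)
      qed auto
      also have "\<dots> = ?C"
      proof -
        have "((2*\<bar>d\<bar>/3) * \<bar>t - d\<bar>) powr (-\<sigma>) = (2*\<bar>d\<bar>/3) powr (-\<sigma>) * \<bar>t - d\<bar> powr (-\<sigma>)"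
          by (rule powr_mult)
        then show ?thesis using True in2 by simp
      qed
      finally show ?thesis using A0 B0 by linarith
    qed
  qed
qed



lemma jbr_measurable[measurable]: "jbr \<in> borel_measurable borel"
  unfolding jbr_def[abs_def] by measurable

lemma nn_translate:
  fixes f :: "real \<Rightarrow> ennreal"
  assumes [measurable]: "f \<in> borel_measurable borel"
  shows "(\<integral>\<^sup>+x. f (x + c) \<partial>lborel) = (\<integral>\<^sup>+x. f x \<partial>lborel)"
  using nn_integral_real_affine[OF assms, of 1 c] by (simp add: add.commute)

lemma nn_reflect:
  fixes f :: "real \<Rightarrow> ennreal"
  assumes [measurable]: "f \<in> borel_measurable borel"
  shows "(\<integral>\<^sup>+x. f (- x) \<partial>lborel) = (\<integral>\<^sup>+x. f x \<partial>lborel)"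
  using nn_integral_real_affine[OF assms, of "-1" 0] by simp

lemma even_nn:
  fixes f :: "real \<Rightarrow> ennreal"
  assumes [measurable]: "f \<in> borel_measurable borel" and ev: "\<And>t. f (- t) = f t"
  shows "(\<integral>\<^sup>+x. f x \<partial>lborel) \<le> 2 * (\<integral>\<^sup>+x. indicator {0..} x * f x \<partial>lborel)"
proof -
  have "(\<integral>\<^sup>+x. f x \<partial>lborel) \<le> (\<integral>\<^sup>+x. indicator {0..} x * f x + indicator {0..} (-x) * f (-x) \<partial>lborel)"
    by (intro nn_integral_mono) (auto simp: ev indicator_def)
  also have "\<dots> = (\<integral>\<^sup>+x. indicator {0..} x * f x \<partial>lborel) + (\<integral>\<^sup>+x. indicator {0..} (-x) * f (-x) \<partial>lborel)"
    by (rule nn_integral_add) auto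
  also have "(\<integral>\<^sup>+x. indicator {0..} (-x) * f (-x) \<partial>lborel) = (\<integral>\<^sup>+x. indicator {0..} x * f x \<partial>lborel)"
    using nn_reflect[of "\<lambda>x. indicator {0..} x * f x"] by simp
  finally show ?thesis by (simp add: mult_2)
qed

lemma int_pow_tail:
  fixes p :: real assumes p: "1 < p"
  shows "(\<integral>\<^sup>+x. ennreal (indicator {1..} x * x powr (-p)) \<partial>lborel) = ennreal (1 / (p - 1))"
proof -
  have "((\<lambda>x. x powr (-p)) has_integral -(1 powr (-p+1)) / (-p+1)) {1..}"
    using p by (intro has_integral_powr_to_inf) auto
  moreover have "-(1 powr (-p+1)) / (-p+1) = 1 / (p - 1)"
  proof -
    have "-p + 1 = -(p - 1)" by simp
    then show ?thesis by (simp only:) (simp add: minus_divide_right)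
  qed
  ultimately have "((\<lambda>x. x powr (-p)) has_integral 1 / (p - 1)) {1..}" by simp
  from nn_integral_has_integral_lebesgue[OF _ this] show ?thesis by simp
qed

lemma int_jbr:
  fixes p :: real assumes p: "1 < p"
  shows "(\<integral>\<^sup>+t. ennreal (jbr t powr (-p)) \<partial>lborel) \<le> ennreal (2 + 2 / (p - 1))"
proof -
  have "(\<integral>\<^sup>+t. ennreal (jbr t powr (-p)) \<partial>lborel) \<le> 2 * (\<integral>\<^sup>+t. indicator {0..} t * ennreal (jbr t powr (-p)) \<partial>lborel)"
    by (rule even_nn) (auto simp: jbr_minus)
  also have "(\<integral>\<^sup>+t. indicator {0..} t * ennreal (jbr t powr (-p)) \<partial>lborel) \<le>
      (\<integral>\<^sup>+t. indicator {0..1} t + ennreal (indicator {1..} t * t powr (-p)) \<partial>lborel)"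
  proof (intro nn_integral_mono)
    fix t :: real
    show "indicator {0..} t * ennreal (jbr t powr (-p)) \<le> indicator {0..1} t + ennreal (indicator {1..} t * t powr (-p))"
    proof (cases "t < 0")
      case True then show ?thesis by simp
    next
      case False
      show ?thesis
      proof (cases "t \<le> 1")
        case True
        have "jbr t powr (-p) \<le> 1" using jbr_ge1[of t] p powr_mono[of "-p" 0 "jbr t"] by simp
        then have "ennreal (jbr t powr (-p)) \<le> 1" by simp
        then have "indicator {0..} t * ennreal (jbr t powr (-p)) \<le> indicator {0..1} t"
          using True False by (simp add: indicator_def)
        then show ?thesis by (rule order_trans) (rule add_increasing2, auto)
      next
        case f2: False
        have "jbr t powr (-p) \<le> t powr (-p)"
          using f2 abs_le_jbr[of t] p by (intro powr_mono2') auto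
        then show ?thesis using f2 False by (simp add: indicator_def)
      qed
    qed
  qed
  also have "\<dots> = (\<integral>\<^sup>+t. indicator {0..1::real} t \<partial>lborel) + (\<integral>\<^sup>+t. ennreal (indicator {1..} t * t powr (-p)) \<partial>lborel)"
    by (subst nn_integral_add) auto
  also have "\<dots> = 1 + ennreal (1 / (p - 1))"
  proof -
    have "(\<integral>\<^sup>+t. indicator {0..1::real} t \<partial>lborel) = emeasure lborel {0..(1::real)}"
      by (rule nn_integral_indicator) simp
    also have "\<dots> = 1" by simp
    finally show ?thesis using int_pow_tail[OF p] by simp
  qed
  finally have "(\<integral>\<^sup>+t. ennreal (jbr t powr (-p)) \<partial>lborel) \<le> 2 * (1 + ennreal (1 / (p - 1)))"
    by (simp add: mult_left_mono)
  also have "\<dots> = ennreal (2 + 2 / (p - 1))"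
  proof -
    have "ennreal (2 + 2 / (p - 1)) = ennreal 2 + ennreal (2 * (1 / (p - 1)))"
      using p by (subst ennreal_plus) auto
    also have "ennreal (2 * (1 / (p - 1))) = 2 * ennreal (1 / (p - 1))"
      using p ennreal_mult[of 2 "1 / (p - 1)"] by simp
    finally show ?thesis by (simp add: distrib_left)
  qed
  finally show ?thesis .
qed

lemma int_sing:
  fixes \<sigma> R :: real assumes s: "0 < \<sigma>" "\<sigma> < 1" and R: "0 < R"
  shows "(\<integral>\<^sup>+w. ennreal (indicator {w. \<bar>w\<bar> < R} w * \<bar>w\<bar> powr (-\<sigma>)) \<partial>lborel) \<le> ennreal (2 * R powr (1 - \<sigma>) / (1 - \<sigma>))"
proof -
  have "(\<integral>\<^sup>+w. ennreal (indicator {w. \<bar>w\<bar> < R} w * \<bar>w\<bar> powr (-\<sigma>)) \<partial>lborel) \<le>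
     2 * (\<integral>\<^sup>+w. indicator {0..} w * ennreal (indicator {w. \<bar>w\<bar> < R} w * \<bar>w\<bar> powr (-\<sigma>)) \<partial>lborel)"
    by (rule even_nn) (auto simp: indicator_def)
  also have "(\<integral>\<^sup>+w. indicator {0..} w * ennreal (indicator {w. \<bar>w\<bar> < R} w * \<bar>w\<bar> powr (-\<sigma>)) \<partial>lborel) \<le>
      (\<integral>\<^sup>+w. ennreal (indicator {0..R} w * w powr (-\<sigma>)) \<partial>lborel)"
    by (intro nn_integral_mono) (auto simp: indicator_def)
  also have "\<dots> = ennreal (R powr (-\<sigma> + 1) / (-\<sigma> + 1))"
  proof -
    have "((\<lambda>x. x powr (-\<sigma>)) has_integral (R powr (-\<sigma>+1) / (-\<sigma>+1))) {0..R}"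
      using s R by (intro has_integral_powr_from_0) auto
    from nn_integral_has_integral_lebesgue[OF _ this] show ?thesis by simp
  qed
  finally have "(\<integral>\<^sup>+w. ennreal (indicator {w. \<bar>w\<bar> < R} w * \<bar>w\<bar> powr (-\<sigma>)) \<partial>lborel)
     \<le> 2 * ennreal (R powr (-\<sigma> + 1) / (-\<sigma> + 1))"
    by (simp add: mult_left_mono)
  also have "\<dots> = ennreal (2 * (R powr (-\<sigma> + 1) / (-\<sigma> + 1)))"
    using s ennreal_mult[of 2 "R powr (-\<sigma> + 1) / (-\<sigma> + 1)"] by simp
  finally show ?thesis by (simp add: add.commute)
qed



definition CG :: "real \<Rightarrow> real \<Rightarrow> real" where
  "CG \<sigma> \<epsilon> = 3 * (2 + 2 / (2*\<sigma> - \<epsilon> - 1)) + 12 + 9 / (1 - \<sigma>)"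

lemma Kbound:
  fixes d \<sigma> \<epsilon> :: real
  assumes s0: "0 < \<sigma>" and s1: "\<sigma> < 1" and e0: "0 \<le> \<epsilon>" and e1: "\<epsilon> < 1" and se: "1 + \<epsilon> < 2*\<sigma>"
    and d: "1 < \<bar>d\<bar>"
  shows "(2*\<bar>d\<bar>/3) powr (-\<sigma>) * (3*\<bar>d\<bar>) powr \<epsilon> * (2 * \<bar>d\<bar> powr (1 - \<sigma>) / (1 - \<sigma>)) \<le> 9 / (1 - \<sigma>)"
proof -
  have a: "(2*\<bar>d\<bar>/3) powr (-\<sigma>) = (2/3) powr (-\<sigma>) * \<bar>d\<bar> powr (-\<sigma>)"
  proof -
    have e: "2*\<bar>d\<bar>/3 = (2/3) * \<bar>d\<bar>" by simp
    show ?thesis by (subst e) (rule powr_mult; simp)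
  qed
  have b: "(3*\<bar>d\<bar>) powr \<epsilon> = 3 powr \<epsilon> * \<bar>d\<bar> powr \<epsilon>"
    by (simp add: powr_mult)
  have c: "\<bar>d\<bar> powr (-\<sigma>) * \<bar>d\<bar> powr \<epsilon> * \<bar>d\<bar> powr (1 - \<sigma>) = \<bar>d\<bar> powr (1 + \<epsilon> - 2*\<sigma>)"
    by (simp add: powr_add[symmetric] add_ac)
  have c1: "\<bar>d\<bar> powr (1 + \<epsilon> - 2*\<sigma>) \<le> 1"
    using powr_mono[of "1 + \<epsilon> - 2*\<sigma>" 0 "\<bar>d\<bar>"] se d by (simp split: if_splits)
  have f1: "(2/3::real) powr (-\<sigma>) = (3/2) powr \<sigma>"
    by (simp add: powr_minus_divide powr_divide)
  have f2: "(3/2::real) powr \<sigma> \<le> 3/2"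
    using powr_mono[of \<sigma> 1 "3/2::real"] s1 by simp
  have f3: "(3::real) powr \<epsilon> \<le> 3"
    using powr_mono[of \<epsilon> 1 "3::real"] e1 by simp
  have "(2*\<bar>d\<bar>/3) powr (-\<sigma>) * (3*\<bar>d\<bar>) powr \<epsilon> * (2 * \<bar>d\<bar> powr (1 - \<sigma>) / (1 - \<sigma>))
      = ((3/2) powr \<sigma> * 3 powr \<epsilon> * 2 * \<bar>d\<bar> powr (1 + \<epsilon> - 2*\<sigma>)) / (1 - \<sigma>)"
    unfolding a b f1 c[symmetric] by (simp add: mult_ac)
  also have "\<dots> \<le> ((3/2) * 3 * 2 * 1) / (1 - \<sigma>)"
    using s1 f2 f3 c1 by (intro divide_right_mono mult_mono) auto
  finally show ?thesis by simp
qed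

lemma ennreal3: "0 \<le> a \<Longrightarrow> 0 \<le> b \<Longrightarrow> 0 \<le> c \<Longrightarrow> ennreal a + ennreal b + ennreal c = ennreal (a + b + c)"
  by (simp add: ennreal_plus)

lemma G0:
  fixes d \<sigma> \<epsilon> :: real
  assumes s0: "0 < \<sigma>" and s1: "\<sigma> < 1" and e0: "0 \<le> \<epsilon>" and e1: "\<epsilon> < 1" and se: "1 + \<epsilon> < 2*\<sigma>"
  shows "(\<integral>\<^sup>+t. ennreal (jbr (t * (t - d)) powr (-\<sigma>) * jbr t powr \<epsilon>) \<partial>lborel) \<le> ennreal (CG \<sigma> \<epsilon>)"
proof -
  define K where "K = (2*\<bar>d\<bar>/3) powr (-\<sigma>) * (3*\<bar>d\<bar>) powr \<epsilon>"
  define A where "A t = 3 * jbr t powr (\<epsilon> - 2*\<sigma>)" for t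
  define B where "B t = 3 * (indicator {-2..2::real} t :: real)" for t :: real
  define Cf where "Cf t = (if 1 < \<bar>d\<bar> then K * (indicator {w. \<bar>w\<bar> < \<bar>d\<bar>} (t - d) * \<bar>t - d\<bar> powr (-\<sigma>)) else 0)" for t :: real
  have K0: "0 \<le> K" unfolding K_def by simp
  have [measurable]: "A \<in> borel_measurable borel" "B \<in> borel_measurable borel" "Cf \<in> borel_measurable borel"
    unfolding A_def[abs_def] B_def[abs_def] Cf_def[abs_def] by measurable
  have A0: "0 \<le> A t" and B0: "0 \<le> B t" and C0: "0 \<le> Cf t" for t
    unfolding A_def B_def Cf_def using K0 by auto
  have "AE t in lborel. ennreal (jbr (t * (t - d)) powr (-\<sigma>) * jbr t powr \<epsilon>) \<le> ennreal (A t) + ennreal (B t) + ennreal (Cf t)"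
    using AE_lborel_singleton[of d]
  proof eventually_elim
    case (elim t)
    have "jbr (t * (t - d)) powr (-\<sigma>) * jbr t powr \<epsilon> \<le> A t + B t + Cf t"
      using g_pointwise[OF s0 s1 e0 e1 elim] unfolding A_def B_def Cf_def K_def by (simp add: mult.assoc)
    then have "ennreal (jbr (t * (t - d)) powr (-\<sigma>) * jbr t powr \<epsilon>) \<le> ennreal (A t + B t + Cf t)"
      by (rule ennreal_leI)
    also have "\<dots> = ennreal (A t) + ennreal (B t) + ennreal (Cf t)"
      using A0 B0 C0 by (simp add: ennreal_plus)
    finally show ?case .
  qed
  then have "(\<integral>\<^sup>+t. ennreal (jbr (t * (t - d)) powr (-\<sigma>) * jbr t powr \<epsilon>) \<partial>lborel) \<le>
      (\<integral>\<^sup>+t. ennreal (A t) + ennreal (B t) + ennreal (Cf t) \<partial>lborel)"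
    by (rule nn_integral_mono_AE)
  also have "\<dots> = (\<integral>\<^sup>+t. ennreal (A t) \<partial>lborel) + (\<integral>\<^sup>+t. ennreal (B t) \<partial>lborel) + (\<integral>\<^sup>+t. ennreal (Cf t) \<partial>lborel)"
    by (simp add: nn_integral_add)
  also have "(\<integral>\<^sup>+t. ennreal (A t) \<partial>lborel) \<le> ennreal (3 * (2 + 2 / (2*\<sigma> - \<epsilon> - 1)))"
  proof -
    have "(\<integral>\<^sup>+t. ennreal (A t) \<partial>lborel) = 3 * (\<integral>\<^sup>+t. ennreal (jbr t powr (-(2*\<sigma> - \<epsilon>))) \<partial>lborel)"
      unfolding A_def by (subst nn_integral_cmult[symmetric]) (auto simp: ennreal_mult)
    also have "\<dots> \<le> 3 * ennreal (2 + 2 / ((2*\<sigma> - \<epsilon>) - 1))"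
      using int_jbr[of "2*\<sigma> - \<epsilon>"] se by (intro mult_left_mono) auto
    also have "\<dots> = ennreal (3 * (2 + 2 / (2*\<sigma> - \<epsilon> - 1)))"
      by (subst ennreal_mult) (use se in auto)
    finally show ?thesis .
  qed
  also have "(\<integral>\<^sup>+t. ennreal (B t) \<partial>lborel) = ennreal 12"
  proof -
    have "(\<integral>\<^sup>+t. ennreal (B t) \<partial>lborel) = (\<integral>\<^sup>+t. 3 * indicator {-2..2::real} t \<partial>lborel)"
      unfolding B_def by (intro nn_integral_cong) (auto simp: indicator_def)
    also have "\<dots> = 3 * emeasure lborel {-2..2::real}"
      by (subst nn_integral_cmult) auto
    also have "\<dots> = ennreal 12" by (simp add: ennreal_mult[symmetric])
    finally show ?thesis .
  qed
  also have "(\<integral>\<^sup>+t. ennreal (Cf t) \<partial>lborel) \<le> ennreal (9 / (1 - \<sigma>))"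
  proof (cases "1 < \<bar>d\<bar>")
    case False
    then show ?thesis unfolding Cf_def by simp
  next
    case True
    define h where "h w = ennreal (indicator {w. \<bar>w\<bar> < \<bar>d\<bar>} w * \<bar>w\<bar> powr (-\<sigma>))" for w :: real
    have [measurable]: "h \<in> borel_measurable borel" unfolding h_def[abs_def] by measurable
    have "(\<integral>\<^sup>+t. ennreal (Cf t) \<partial>lborel) = (\<integral>\<^sup>+t. ennreal K * h (t + (- d)) \<partial>lborel)"
      unfolding Cf_def h_def using True K0 by (intro nn_integral_cong) (simp add: ennreal_mult)
    also have "\<dots> = ennreal K * (\<integral>\<^sup>+t. h (t + (- d)) \<partial>lborel)"
      by (rule nn_integral_cmult) measurable
    also have "(\<integral>\<^sup>+t. h (t + (- d)) \<partial>lborel) = (\<integral>\<^sup>+t. h t \<partial>lborel)"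
      by (rule nn_translate) measurable
    also have "(\<integral>\<^sup>+t. h t \<partial>lborel) \<le> ennreal (2 * \<bar>d\<bar> powr (1 - \<sigma>) / (1 - \<sigma>))"
      unfolding h_def using int_sing[OF s0 s1, of "\<bar>d\<bar>"] True by simp
    also have "ennreal K * ennreal (2 * \<bar>d\<bar> powr (1 - \<sigma>) / (1 - \<sigma>)) = ennreal (K * (2 * \<bar>d\<bar> powr (1 - \<sigma>) / (1 - \<sigma>)))"
      by (subst ennreal_mult) (use K0 s1 in auto)
    also have "\<dots> \<le> ennreal (9 / (1 - \<sigma>))"
      using Kbound[OF s0 s1 e0 e1 se True] unfolding K_def by (rule ennreal_leI)
    finally show ?thesis by (simp add: mult_left_mono)
  qed
  also have "ennreal (3 * (2 + 2 / (2*\<sigma> - \<epsilon> - 1))) + ennreal 12 + ennreal (9 / (1 - \<sigma>)) = ennreal (CG \<sigma> \<epsilon>)"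
    unfolding CG_def using se s1 ennreal3[of "3 * (2 + 2 / (2*\<sigma> - \<epsilon> - 1))" 12 "9 / (1 - \<sigma>)"] by simp
  finally show ?thesis by (simp add: add_mono)
qed



definition kk :: "real \<Rightarrow> real \<Rightarrow> real \<Rightarrow> real \<Rightarrow> real" where
  "kk \<sigma> \<epsilon> a b = jbr (a * b) powr (-\<sigma>) * (jbr a powr \<epsilon> + jbr b powr \<epsilon>)"

lemma kk_nonneg: "0 \<le> kk \<sigma> \<epsilon> a b" unfolding kk_def by simp

lemma kk_measurable[measurable (raw)]:
  assumes [measurable]: "f \<in> borel_measurable M" "g \<in> borel_measurable M"
  shows "(\<lambda>x. kk \<sigma> \<epsilon> (f x) (g x)) \<in> borel_measurable M"
  unfolding kk_def by measurable

lemma G1: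
  fixes c1 c2 \<sigma> \<epsilon> :: real
  assumes s0: "0 < \<sigma>" and s1: "\<sigma> < 1" and e0: "0 \<le> \<epsilon>" and e1: "\<epsilon> < 1" and se: "1 + \<epsilon> < 2*\<sigma>"
  shows "(\<integral>\<^sup>+t. ennreal (jbr ((t - c1) * (t - c2)) powr (-\<sigma>) * jbr (t - c1) powr \<epsilon>) \<partial>lborel) \<le> ennreal (CG \<sigma> \<epsilon>)"
proof -
  define f where "f u = ennreal (jbr (u * (u - (c2 - c1))) powr (-\<sigma>) * jbr u powr \<epsilon>)" for u
  have [measurable]: "f \<in> borel_measurable borel" unfolding f_def[abs_def] by measurable
  have "(\<integral>\<^sup>+t. ennreal (jbr ((t - c1) * (t - c2)) powr (-\<sigma>) * jbr (t - c1) powr \<epsilon>) \<partial>lborel)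
      = (\<integral>\<^sup>+t. f (t + (- c1)) \<partial>lborel)"
    unfolding f_def by (simp add: algebra_simps)
  also have "\<dots> = (\<integral>\<^sup>+t. f t \<partial>lborel)" by (rule nn_translate) measurable
  also have "\<dots> \<le> ennreal (CG \<sigma> \<epsilon>)" unfolding f_def by (rule G0[OF s0 s1 e0 e1 se])
  finally show ?thesis .
qed

lemma Gk:
  fixes c1 c2 \<sigma> \<epsilon> :: real
  assumes s0: "0 < \<sigma>" and s1: "\<sigma> < 1" and e0: "0 \<le> \<epsilon>" and e1: "\<epsilon> < 1" and se: "1 + \<epsilon> < 2*\<sigma>"
  shows "(\<integral>\<^sup>+t. ennreal (kk \<sigma> \<epsilon> (t - c1) (t - c2)) \<partial>lborel) \<le> ennreal (2 * CG \<sigma> \<epsilon>)"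
proof -
  have "(\<integral>\<^sup>+t. ennreal (kk \<sigma> \<epsilon> (t - c1) (t - c2)) \<partial>lborel) =
     (\<integral>\<^sup>+t. ennreal (jbr ((t - c1) * (t - c2)) powr (-\<sigma>) * jbr (t - c1) powr \<epsilon>) +
            ennreal (jbr ((t - c2) * (t - c1)) powr (-\<sigma>) * jbr (t - c2) powr \<epsilon>) \<partial>lborel)"
    unfolding kk_def by (intro nn_integral_cong) (simp add: distrib_left ennreal_plus mult.commute)
  also have "\<dots> = (\<integral>\<^sup>+t. ennreal (jbr ((t - c1) * (t - c2)) powr (-\<sigma>) * jbr (t - c1) powr \<epsilon>) \<partial>lborel) +
      (\<integral>\<^sup>+t. ennreal (jbr ((t - c2) * (t - c1)) powr (-\<sigma>) * jbr (t - c2) powr \<epsilon>) \<partial>lborel)"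
    by (rule nn_integral_add) measurable
  also have "\<dots> \<le> ennreal (CG \<sigma> \<epsilon>) + ennreal (CG \<sigma> \<epsilon>)"
    by (intro add_mono G1[OF s0 s1 e0 e1 se])
  also have "\<dots> = ennreal (2 * CG \<sigma> \<epsilon>)"
  proof -
    have "0 \<le> CG \<sigma> \<epsilon>" unfolding CG_def using s1 se by simp
    then show ?thesis by (simp add: ennreal_plus[symmetric] del: ennreal_plus)
  qed
  finally show ?thesis .
qed

definition CW :: "real \<Rightarrow> real \<Rightarrow> real" where
  "CW s \<epsilon> = 3 powr s * 6 powr (\<epsilon>/2)"

definition Kr :: "real \<Rightarrow> real \<Rightarrow> real \<Rightarrow> real \<Rightarrow> real \<Rightarrow> real \<Rightarrow> real" where
  "Kr \<sigma> s \<epsilon> \<xi> x z = jbr (Phi \<xi> x (\<xi> - x - z) z) powr (-\<sigma>) * jbr \<xi> powr (s + \<epsilon>) *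
      (jbr x powr (-s) * jbr (\<xi> - x - z) powr (-s) * jbr z powr (-s))"

lemma Kr_nonneg: "0 \<le> Kr \<sigma> s \<epsilon> \<xi> x z" unfolding Kr_def by simp

lemma Kr_bound:
  assumes "0 \<le> s" "0 \<le> \<epsilon>" "\<epsilon> \<le> 2 * s"
  shows "Kr \<sigma> s \<epsilon> \<xi> x z \<le> CW s \<epsilon> * kk \<sigma> \<epsilon> (\<xi> - x) (\<xi> - z)"
proof -
  define y where "y = \<xi> - x - z"
  have xi: "\<xi> = x + y + z" and a: "\<xi> - x = y + z" and b: "\<xi> - z = x + y" unfolding y_def by simp_all
  define P where "P = jbr x powr s * jbr y powr s * jbr z powr s"
  define Pm where "Pm = jbr x powr (-s) * jbr y powr (-s) * jbr z powr (-s)"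
  have PPm: "P * Pm = 1" unfolding P_def Pm_def using jbr_pos[of x] jbr_pos[of y] jbr_pos[of z]
    by (simp add: powr_minus field_simps)
  have Pm0: "0 \<le> Pm" unfolding Pm_def by simp
  have W: "jbr \<xi> powr (s + \<epsilon>) \<le> CW s \<epsilon> * (jbr (\<xi> - x) powr \<epsilon> + jbr (\<xi> - z) powr \<epsilon>) * P"
    unfolding xi a b P_def CW_def using W_bound[OF assms, of x y z] by simp
  have "Kr \<sigma> s \<epsilon> \<xi> x z = jbr ((\<xi> - x) * (\<xi> - z)) powr (-\<sigma>) * (jbr \<xi> powr (s + \<epsilon>) * Pm)"
    unfolding Kr_def Phi_def Pm_def y_def by (simp add: mult_ac)
  also have "\<dots> \<le> jbr ((\<xi> - x) * (\<xi> - z)) powr (-\<sigma>) * (CW s \<epsilon> * (jbr (\<xi> - x) powr \<epsilon> + jbr (\<xi> - z) powr \<epsilon>) * P * Pm)"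
    using W Pm0 by (intro mult_left_mono mult_right_mono) auto
  also have "\<dots> = CW s \<epsilon> * kk \<sigma> \<epsilon> (\<xi> - x) (\<xi> - z)"
    unfolding kk_def using PPm by (simp add: mult_ac)
  finally show ?thesis .
qed



lemma Kr_measurable[measurable (raw)]:
  assumes [measurable]: "f \<in> borel_measurable M" "g \<in> borel_measurable M" "h \<in> borel_measurable M"
  shows "(\<lambda>x. Kr \<sigma> s \<epsilon> (f x) (g x) (h x)) \<in> borel_measurable M"
  unfolding Kr_def Phi_def by measurable

lemma CS_step:
  fixes G1 G2 G3 :: "real \<Rightarrow> real"
  assumes [measurable]: "G1 \<in> borel_measurable borel" "G2 \<in> borel_measurable borel" "G3 \<in> borel_measurable borel"
    and nn: "\<And>t. 0 \<le> G1 t" "\<And>t. 0 \<le> G2 t" "\<And>t. 0 \<le> G3 t"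
  shows "(\<integral>\<^sup>+p. ennreal (Kr \<sigma> s \<epsilon> \<xi> (fst p) (snd p) * G1 (fst p) * G2 (\<xi> - fst p - snd p) * G3 (snd p)) \<partial>(lborel \<Otimes>\<^sub>M lborel))\<^sup>2
    \<le> (\<integral>\<^sup>+p. ennreal (Kr \<sigma> s \<epsilon> \<xi> (fst p) (snd p) * (G1 (fst p))\<^sup>2 * (G3 (snd p))\<^sup>2) \<partial>(lborel \<Otimes>\<^sub>M lborel)) *
      (\<integral>\<^sup>+p. ennreal (Kr \<sigma> s \<epsilon> \<xi> (fst p) (snd p) * (G2 (\<xi> - fst p - snd p))\<^sup>2) \<partial>(lborel \<Otimes>\<^sub>M lborel))"
proof -
  define K where "K p = Kr \<sigma> s \<epsilon> \<xi> (fst p) (snd p)" for p :: "real \<times> real"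
  have K0: "0 \<le> K p" for p unfolding K_def by (rule Kr_nonneg)
  define f where "f p = ennreal (sqrt (K p) * G1 (fst p) * G3 (snd p))" for p
  define g where "g p = ennreal (sqrt (K p) * G2 (\<xi> - fst p - snd p))" for p
  have [measurable]: "f \<in> borel_measurable (lborel \<Otimes>\<^sub>M lborel)"
    unfolding f_def[abs_def] K_def by measurable
  have [measurable]: "g \<in> borel_measurable (lborel \<Otimes>\<^sub>M lborel)"
    unfolding g_def[abs_def] K_def by measurable
  have fg: "f p * g p = ennreal (K p * G1 (fst p) * G2 (\<xi> - fst p - snd p) * G3 (snd p))" for p
  proof -
    have "f p * g p = ennreal ((sqrt (K p) * G1 (fst p) * G3 (snd p)) * (sqrt (K p) * G2 (\<xi> - fst p - snd p)))"
      unfolding f_def g_def using K0[of p] nn by (simp add: ennreal_mult)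
    also have "(sqrt (K p) * G1 (fst p) * G3 (snd p)) * (sqrt (K p) * G2 (\<xi> - fst p - snd p))
       = (sqrt (K p) * sqrt (K p)) * G1 (fst p) * G2 (\<xi> - fst p - snd p) * G3 (snd p)"
      by (simp only: mult_ac)
    also have "sqrt (K p) * sqrt (K p) = K p" using K0[of p] by simp
    finally show ?thesis .
  qed
  have f2: "f p ^ 2 = ennreal (K p * (G1 (fst p))\<^sup>2 * (G3 (snd p))\<^sup>2)" for p
  proof -
    have "f p ^ 2 = ennreal ((sqrt (K p) * G1 (fst p) * G3 (snd p)) ^ 2)"
      unfolding f_def using K0[of p] nn by (subst ennreal_power) auto
    also have "(sqrt (K p) * G1 (fst p) * G3 (snd p)) ^ 2 = K p * (G1 (fst p))\<^sup>2 * (G3 (snd p))\<^sup>2"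
      using K0[of p] by (simp add: power_mult_distrib)
    finally show ?thesis .
  qed
  have g2: "g p ^ 2 = ennreal (K p * (G2 (\<xi> - fst p - snd p))\<^sup>2)" for p
  proof -
    have "g p ^ 2 = ennreal ((sqrt (K p) * G2 (\<xi> - fst p - snd p)) ^ 2)"
      unfolding g_def using K0[of p] nn by (subst ennreal_power) auto
    also have "(sqrt (K p) * G2 (\<xi> - fst p - snd p)) ^ 2 = K p * (G2 (\<xi> - fst p - snd p))\<^sup>2"
      using K0[of p] by (simp add: power_mult_distrib)
    finally show ?thesis .
  qed
  from Cauchy_Schwarz_nn_integral[of f "lborel \<Otimes>\<^sub>M lborel" g] show ?thesis
    unfolding fg f2 g2 K_def by simp
qed

lemma V_bound:
  fixes G2 :: "real \<Rightarrow> real"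
  assumes [measurable]: "G2 \<in> borel_measurable borel" and nn: "\<And>t. 0 \<le> G2 t"
    and hB: "\<And>y. (\<integral>\<^sup>+x. ennreal (Kr \<sigma> s \<epsilon> \<xi> x (\<xi> - x - y)) \<partial>lborel) \<le> ennreal CB"
  shows "(\<integral>\<^sup>+p. ennreal (Kr \<sigma> s \<epsilon> \<xi> (fst p) (snd p) * (G2 (\<xi> - fst p - snd p))\<^sup>2) \<partial>(lborel \<Otimes>\<^sub>M lborel))
     \<le> ennreal CB * (\<integral>\<^sup>+y. ennreal ((G2 y)\<^sup>2) \<partial>lborel)"
proof -
  define H where "H x z = ennreal (Kr \<sigma> s \<epsilon> \<xi> x z * (G2 (\<xi> - x - z))\<^sup>2)" for x z
  have Hm[measurable]: "(\<lambda>p. H (fst p) (snd p)) \<in> borel_measurable (lborel \<Otimes>\<^sub>M lborel)"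
    unfolding H_def by measurable
  have Hm1[measurable]: "H x \<in> borel_measurable borel" for x
    unfolding H_def[abs_def] by measurable
  have "(\<integral>\<^sup>+p. ennreal (Kr \<sigma> s \<epsilon> \<xi> (fst p) (snd p) * (G2 (\<xi> - fst p - snd p))\<^sup>2) \<partial>(lborel \<Otimes>\<^sub>M lborel))
      = (\<integral>\<^sup>+x. \<integral>\<^sup>+z. H x z \<partial>lborel \<partial>lborel)"
    using lborel.nn_integral_fst[OF Hm] unfolding H_def by simp
  also have "\<dots> = (\<integral>\<^sup>+x. \<integral>\<^sup>+y. ennreal (Kr \<sigma> s \<epsilon> \<xi> x (\<xi> - x - y)) * ennreal ((G2 y)\<^sup>2) \<partial>lborel \<partial>lborel)"
  proof (rule nn_integral_cong)
    fix x :: real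
    have "(\<integral>\<^sup>+z. H x z \<partial>lborel) = ennreal \<bar>-1::real\<bar> * (\<integral>\<^sup>+y. H x ((\<xi> - x) + (-1) * y) \<partial>lborel)"
      by (rule nn_integral_real_affine) auto
    also have "\<dots> = (\<integral>\<^sup>+y. ennreal (Kr \<sigma> s \<epsilon> \<xi> x (\<xi> - x - y)) * ennreal ((G2 y)\<^sup>2) \<partial>lborel)"
      unfolding H_def using Kr_nonneg by (simp add: ennreal_mult)
    finally show "(\<integral>\<^sup>+z. H x z \<partial>lborel) = (\<integral>\<^sup>+y. ennreal (Kr \<sigma> s \<epsilon> \<xi> x (\<xi> - x - y)) * ennreal ((G2 y)\<^sup>2) \<partial>lborel)" .
  qed
  also have "\<dots> = (\<integral>\<^sup>+y. \<integral>\<^sup>+x. ennreal (Kr \<sigma> s \<epsilon> \<xi> x (\<xi> - x - y)) * ennreal ((G2 y)\<^sup>2) \<partial>lborel \<partial>lborel)"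
    by (rule lborel_pair.Fubini'[symmetric]) measurable
  also have "\<dots> = (\<integral>\<^sup>+y. (\<integral>\<^sup>+x. ennreal (Kr \<sigma> s \<epsilon> \<xi> x (\<xi> - x - y)) \<partial>lborel) * ennreal ((G2 y)\<^sup>2) \<partial>lborel)"
    by (intro nn_integral_cong nn_integral_multc) measurable
  also have "\<dots> \<le> (\<integral>\<^sup>+y. ennreal CB * ennreal ((G2 y)\<^sup>2) \<partial>lborel)"
    by (intro nn_integral_mono mult_right_mono hB) simp
  also have "\<dots> = ennreal CB * (\<integral>\<^sup>+y. ennreal ((G2 y)\<^sup>2) \<partial>lborel)"
    by (rule nn_integral_cmult) measurable
  finally show ?thesis .
qed

lemma U_bound:
  fixes G1 G3 :: "real \<Rightarrow> real"
  assumes [measurable]: "G1 \<in> borel_measurable borel" "G3 \<in> borel_measurable borel"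
    and hA: "\<And>x z. (\<integral>\<^sup>+\<xi>. ennreal (Kr \<sigma> s \<epsilon> \<xi> x z) \<partial>lborel) \<le> ennreal CA"
  shows "(\<integral>\<^sup>+\<xi>. (\<integral>\<^sup>+p. ennreal (Kr \<sigma> s \<epsilon> \<xi> (fst p) (snd p) * (G1 (fst p))\<^sup>2 * (G3 (snd p))\<^sup>2) \<partial>(lborel \<Otimes>\<^sub>M lborel)) \<partial>lborel)
     \<le> ennreal CA * ((\<integral>\<^sup>+x. ennreal ((G1 x)\<^sup>2) \<partial>lborel) * (\<integral>\<^sup>+z. ennreal ((G3 z)\<^sup>2) \<partial>lborel))"
proof -
  define H where "H \<xi> p = ennreal (Kr \<sigma> s \<epsilon> \<xi> (fst p) (snd p)) * ennreal ((G1 (fst p))\<^sup>2 * (G3 (snd p))\<^sup>2)" for \<xi> :: real and p :: "real \<times> real"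
  have Hm[measurable]: "case_prod H \<in> borel_measurable (lborel \<Otimes>\<^sub>M (lborel \<Otimes>\<^sub>M lborel))"
    unfolding H_def[abs_def] by measurable
  have "(\<integral>\<^sup>+\<xi>. (\<integral>\<^sup>+p. ennreal (Kr \<sigma> s \<epsilon> \<xi> (fst p) (snd p) * (G1 (fst p))\<^sup>2 * (G3 (snd p))\<^sup>2) \<partial>(lborel \<Otimes>\<^sub>M lborel)) \<partial>lborel)
      = (\<integral>\<^sup>+\<xi>. (\<integral>\<^sup>+p. H \<xi> p \<partial>(lborel \<Otimes>\<^sub>M lborel)) \<partial>lborel)"
    unfolding H_def using Kr_nonneg by (simp add: ennreal_mult mult.assoc)
  also have "\<dots> = (\<integral>\<^sup>+p. (\<integral>\<^sup>+\<xi>. H \<xi> p \<partial>lborel) \<partial>(lborel \<Otimes>\<^sub>M lborel))"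
    by (rule pair_sigma_finite.Fubini'[symmetric]) (auto intro!: pair_sigma_finite.intro sigma_finite_pair_measure
          lborel.sigma_finite_measure_axioms)
  also have "\<dots> = (\<integral>\<^sup>+p. (\<integral>\<^sup>+\<xi>. ennreal (Kr \<sigma> s \<epsilon> \<xi> (fst p) (snd p)) \<partial>lborel) * ennreal ((G1 (fst p))\<^sup>2 * (G3 (snd p))\<^sup>2) \<partial>(lborel \<Otimes>\<^sub>M lborel))"
    unfolding H_def by (intro nn_integral_cong nn_integral_multc) measurable
  also have "\<dots> \<le> (\<integral>\<^sup>+p. ennreal CA * ennreal ((G1 (fst p))\<^sup>2 * (G3 (snd p))\<^sup>2) \<partial>(lborel \<Otimes>\<^sub>M lborel))"
    by (intro nn_integral_mono) (simp add: hA mult_right_mono)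
  also have "\<dots> = ennreal CA * (\<integral>\<^sup>+p. ennreal ((G1 (fst p))\<^sup>2) * ennreal ((G3 (snd p))\<^sup>2) \<partial>(lborel \<Otimes>\<^sub>M lborel))"
    by (subst nn_integral_cmult[symmetric]) (auto simp: ennreal_mult)
  also have "(\<integral>\<^sup>+p. ennreal ((G1 (fst p))\<^sup>2) * ennreal ((G3 (snd p))\<^sup>2) \<partial>(lborel \<Otimes>\<^sub>M lborel))
      = (\<integral>\<^sup>+x. \<integral>\<^sup>+z. ennreal ((G1 x)\<^sup>2) * ennreal ((G3 z)\<^sup>2) \<partial>lborel \<partial>lborel)"
    by (rule lborel.nn_integral_fst[symmetric, where f="\<lambda>p. ennreal ((G1 (fst p))\<^sup>2) * ennreal ((G3 (snd p))\<^sup>2)", simplified]) measurable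
  also have "\<dots> = (\<integral>\<^sup>+x. ennreal ((G1 x)\<^sup>2) * (\<integral>\<^sup>+z. ennreal ((G3 z)\<^sup>2) \<partial>lborel) \<partial>lborel)"
    by (intro nn_integral_cong nn_integral_cmult) measurable
  also have "\<dots> = (\<integral>\<^sup>+x. ennreal ((G1 x)\<^sup>2) \<partial>lborel) * (\<integral>\<^sup>+z. ennreal ((G3 z)\<^sup>2) \<partial>lborel)"
    by (rule nn_integral_multc) measurable
  finally show ?thesis .
qed



lemma kk_neg: "kk \<sigma> \<epsilon> (- a) b = kk \<sigma> \<epsilon> a b"
  unfolding kk_def by (simp add: jbr_minus)

lemma CW_nonneg: "0 \<le> CW s \<epsilon>" unfolding CW_def by simp

lemma CG_nonneg: "\<sigma> < 1 \<Longrightarrow> 1 + \<epsilon> < 2*\<sigma> \<Longrightarrow> 0 \<le> CG \<sigma> \<epsilon>" unfolding CG_def by simp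

lemma hA_bound:
  assumes s: "0 \<le> s" and e0: "0 < \<epsilon>" and e2: "\<epsilon> \<le> 2 * s" and e1: "\<epsilon> < 1"
    and s0: "0 < \<sigma>" and s1: "\<sigma> < 1" and se: "1 + \<epsilon> < 2*\<sigma>"
  shows "(\<integral>\<^sup>+\<xi>. ennreal (Kr \<sigma> s \<epsilon> \<xi> x z) \<partial>lborel) \<le> ennreal (CW s \<epsilon> * (2 * CG \<sigma> \<epsilon>))"
proof -
  have "(\<integral>\<^sup>+\<xi>. ennreal (Kr \<sigma> s \<epsilon> \<xi> x z) \<partial>lborel) \<le> (\<integral>\<^sup>+\<xi>. ennreal (CW s \<epsilon>) * ennreal (kk \<sigma> \<epsilon> (\<xi> - x) (\<xi> - z)) \<partial>lborel)"
    using Kr_bound[OF s less_imp_le[OF e0] e2] CW_nonneg kk_nonneg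
    by (intro nn_integral_mono) (simp add: ennreal_mult[symmetric] ennreal_leI)
  also have "\<dots> = ennreal (CW s \<epsilon>) * (\<integral>\<^sup>+\<xi>. ennreal (kk \<sigma> \<epsilon> (\<xi> - x) (\<xi> - z)) \<partial>lborel)"
    by (rule nn_integral_cmult) measurable
  also have "\<dots> \<le> ennreal (CW s \<epsilon>) * ennreal (2 * CG \<sigma> \<epsilon>)"
    by (intro mult_left_mono Gk[OF s0 s1 less_imp_le[OF e0] e1 se]) simp
  also have "\<dots> = ennreal (CW s \<epsilon> * (2 * CG \<sigma> \<epsilon>))"
    using CW_nonneg CG_nonneg[OF s1 se] by (simp add: ennreal_mult)
  finally show ?thesis .
qed

lemma hB_bound:
  assumes s: "0 \<le> s" and e0: "0 < \<epsilon>" and e2: "\<epsilon> \<le> 2 * s" and e1: "\<epsilon> < 1"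
    and s0: "0 < \<sigma>" and s1: "\<sigma> < 1" and se: "1 + \<epsilon> < 2*\<sigma>"
  shows "(\<integral>\<^sup>+x. ennreal (Kr \<sigma> s \<epsilon> \<xi> x (\<xi> - x - y)) \<partial>lborel) \<le> ennreal (CW s \<epsilon> * (2 * CG \<sigma> \<epsilon>))"
proof -
  have "(\<integral>\<^sup>+x. ennreal (Kr \<sigma> s \<epsilon> \<xi> x (\<xi> - x - y)) \<partial>lborel) \<le> (\<integral>\<^sup>+x. ennreal (CW s \<epsilon>) * ennreal (kk \<sigma> \<epsilon> (x - \<xi>) (x - (- y))) \<partial>lborel)"
  proof (intro nn_integral_mono)
    fix x
    have "kk \<sigma> \<epsilon> (\<xi> - x) (\<xi> - (\<xi> - x - y)) = kk \<sigma> \<epsilon> (x - \<xi>) (x - (- y))"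
      using kk_neg[of \<sigma> \<epsilon> "x - \<xi>" "x + y"] by simp
    then show "ennreal (Kr \<sigma> s \<epsilon> \<xi> x (\<xi> - x - y)) \<le> ennreal (CW s \<epsilon>) * ennreal (kk \<sigma> \<epsilon> (x - \<xi>) (x - (- y)))"
      using Kr_bound[OF s less_imp_le[OF e0] e2, of \<sigma> \<xi> x "\<xi> - x - y"] CW_nonneg kk_nonneg
      by (simp add: ennreal_mult[symmetric] ennreal_leI)
  qed
  also have "\<dots> = ennreal (CW s \<epsilon>) * (\<integral>\<^sup>+x. ennreal (kk \<sigma> \<epsilon> (x - \<xi>) (x - (- y))) \<partial>lborel)"
    by (rule nn_integral_cmult) measurable
  also have "\<dots> \<le> ennreal (CW s \<epsilon>) * ennreal (2 * CG \<sigma> \<epsilon>)"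
    by (intro mult_left_mono Gk[OF s0 s1 less_imp_le[OF e0] e1 se]) simp
  also have "\<dots> = ennreal (CW s \<epsilon> * (2 * CG \<sigma> \<epsilon>))"
    using CW_nonneg CG_nonneg[OF s1 se] by (simp add: ennreal_mult)
  finally show ?thesis .
qed

lemma main_nn:
  fixes G1 G2 G3 :: "real \<Rightarrow> real"
  assumes s: "0 \<le> s" and e0: "0 < \<epsilon>" and e2: "\<epsilon> \<le> 2 * s" and e1: "\<epsilon> < 1"
    and s0: "0 < \<sigma>" and s1: "\<sigma> < 1" and se: "1 + \<epsilon> < 2*\<sigma>"
    and [measurable]: "G1 \<in> borel_measurable borel" "G2 \<in> borel_measurable borel" "G3 \<in> borel_measurable borel"
    and nn: "\<And>t. 0 \<le> G1 t" "\<And>t. 0 \<le> G2 t" "\<And>t. 0 \<le> G3 t"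
  shows "(\<integral>\<^sup>+\<xi>. (\<integral>\<^sup>+p. ennreal (Kr \<sigma> s \<epsilon> \<xi> (fst p) (snd p) * G1 (fst p) * G2 (\<xi> - fst p - snd p) * G3 (snd p)) \<partial>(lborel \<Otimes>\<^sub>M lborel))\<^sup>2 \<partial>lborel)
    \<le> ennreal ((CW s \<epsilon> * (2 * CG \<sigma> \<epsilon>))\<^sup>2) *
      ((\<integral>\<^sup>+x. ennreal ((G1 x)\<^sup>2) \<partial>lborel) * (\<integral>\<^sup>+x. ennreal ((G2 x)\<^sup>2) \<partial>lborel) * (\<integral>\<^sup>+x. ennreal ((G3 x)\<^sup>2) \<partial>lborel))"
proof -
  define C where "C = CW s \<epsilon> * (2 * CG \<sigma> \<epsilon>)"
  have C0: "0 \<le> C" unfolding C_def using CW_nonneg CG_nonneg[OF s1 se] by simp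
  define N1 where "N1 = (\<integral>\<^sup>+x. ennreal ((G1 x)\<^sup>2) \<partial>lborel)"
  define N2 where "N2 = (\<integral>\<^sup>+x. ennreal ((G2 x)\<^sup>2) \<partial>lborel)"
  define N3 where "N3 = (\<integral>\<^sup>+x. ennreal ((G3 x)\<^sup>2) \<partial>lborel)"
  define U where "U \<xi> = (\<integral>\<^sup>+p. ennreal (Kr \<sigma> s \<epsilon> \<xi> (fst p) (snd p) * (G1 (fst p))\<^sup>2 * (G3 (snd p))\<^sup>2) \<partial>(lborel \<Otimes>\<^sub>M lborel))" for \<xi>
  have sf: "sigma_finite_measure (lborel \<Otimes>\<^sub>M lborel :: (real \<times> real) measure)"
    by (intro sigma_finite_pair_measure lborel.sigma_finite_measure_axioms)
  have Um: "U \<in> borel_measurable lborel"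
    unfolding U_def[abs_def]
    by (rule sigma_finite_measure.borel_measurable_nn_integral[OF sf]) measurable
  have V: "(\<integral>\<^sup>+p. ennreal (Kr \<sigma> s \<epsilon> \<xi> (fst p) (snd p) * (G2 (\<xi> - fst p - snd p))\<^sup>2) \<partial>(lborel \<Otimes>\<^sub>M lborel))
     \<le> ennreal C * N2" for \<xi>
    unfolding N2_def C_def
    by (rule V_bound) (use nn hB_bound[OF s e0 e2 e1 s0 s1 se] in auto)
  have "(\<integral>\<^sup>+\<xi>. (\<integral>\<^sup>+p. ennreal (Kr \<sigma> s \<epsilon> \<xi> (fst p) (snd p) * G1 (fst p) * G2 (\<xi> - fst p - snd p) * G3 (snd p)) \<partial>(lborel \<Otimes>\<^sub>M lborel))\<^sup>2 \<partial>lborel)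
     \<le> (\<integral>\<^sup>+\<xi>. U \<xi> * (ennreal C * N2) \<partial>lborel)"
  proof (intro nn_integral_mono)
    fix \<xi>
    show "(\<integral>\<^sup>+p. ennreal (Kr \<sigma> s \<epsilon> \<xi> (fst p) (snd p) * G1 (fst p) * G2 (\<xi> - fst p - snd p) * G3 (snd p)) \<partial>(lborel \<Otimes>\<^sub>M lborel))\<^sup>2
       \<le> U \<xi> * (ennreal C * N2)"
      unfolding U_def using order_trans[OF CS_step[of G1 G2 G3 \<sigma> s \<epsilon> \<xi>, OF _ _ _ nn] mult_left_mono[OF V[of \<xi>]]]
      by simp
  qed
  also have "\<dots> = (\<integral>\<^sup>+\<xi>. U \<xi> \<partial>lborel) * (ennreal C * N2)"
    by (rule nn_integral_multc) (use Um in simp)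
  also have "\<dots> \<le> (ennreal C * (N1 * N3)) * (ennreal C * N2)"
    unfolding U_def N1_def N3_def C_def
    by (intro mult_right_mono U_bound) (use hA_bound[OF s e0 e2 e1 s0 s1 se] in auto)
  also have "\<dots> = ennreal (C\<^sup>2) * (N1 * N2 * N3)"
    using C0 by (simp add: ennreal_mult power2_eq_square mult_ac)
  finally show ?thesis unfolding C_def N1_def N2_def N3_def .
qed



lemma pw_identity:
  "jbr \<xi> powr (s + \<epsilon>) * norm (T_integrand \<sigma> f1 f2 f3 \<xi> (x, z)) =
   Kr \<sigma> s \<epsilon> \<xi> x z * (jbr x powr s * cmod (f1 x)) * (jbr (\<xi> - x - z) powr s * cmod (f2 (\<xi> - x - z))) * (jbr z powr s * cmod (f3 z))"
proof -
  have n: "norm (T_integrand \<sigma> f1 f2 f3 \<xi> (x, z)) = jbr (Phi \<xi> x (\<xi> - x - z) z) powr (- \<sigma>) * cmod (f1 x) * cmod (f2 (\<xi> - x - z)) * cmod (f3 z)"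
    unfolding T_integrand_def by (simp add: norm_mult)
  have i: "jbr t powr (-s) * jbr t powr s = 1" for t
    using jbr_pos[of t] by (simp add: powr_minus)
  show ?thesis unfolding n Kr_def
    using i[of x] i[of "\<xi> - x - z"] i[of z]
    by (simp add: mult_ac) (metis (no_types, lifting) mult.assoc mult.left_commute mult_1_right)
qed

lemma Hs_facts:
  assumes "Hs_space s f"
  shows "f \<in> borel_measurable borel"
    and "(\<integral>\<^sup>+x. ennreal ((jbr x powr s * cmod (f x))\<^sup>2) \<partial>lborel) = ennreal ((Hs_norm s f)\<^sup>2)"
proof -
  from assms have m: "f \<in> borel_measurable lborel" and i: "integrable lborel (\<lambda>\<xi>. jbr \<xi> powr (2 * s) * (cmod (f \<xi>))\<^sup>2)"
    unfolding Hs_space_def by auto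
  then show fm: "f \<in> borel_measurable borel" by simp
  have sq: "(jbr x powr s * cmod (f x))\<^sup>2 = jbr x powr (2 * s) * (cmod (f x))\<^sup>2" for x
  proof -
    have "(jbr x powr s)\<^sup>2 = jbr x powr s * jbr x powr s" by (simp add: power2_eq_square)
    also have "\<dots> = jbr x powr (s + s)" by (rule powr_add[symmetric])
    also have "s + s = 2 * s" by simp
    finally have "(jbr x powr s)\<^sup>2 = jbr x powr (2 * s)" .
    then show ?thesis by (simp add: power_mult_distrib)
  qed
  have I0: "0 \<le> (\<integral>\<xi>. jbr \<xi> powr (2 * s) * (cmod (f \<xi>))\<^sup>2 \<partial>lborel)"
    by (intro integral_nonneg_AE) auto
  have "(\<integral>\<^sup>+x. ennreal ((jbr x powr s * cmod (f x))\<^sup>2) \<partial>lborel) = (\<integral>\<^sup>+x. ennreal (jbr x powr (2 * s) * (cmod (f x))\<^sup>2) \<partial>lborel)"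
    unfolding sq ..
  also have "\<dots> = ennreal (\<integral>\<xi>. jbr \<xi> powr (2 * s) * (cmod (f \<xi>))\<^sup>2 \<partial>lborel)"
    by (rule nn_integral_eq_integral[OF i]) auto
  also have "\<dots> = ennreal ((Hs_norm s f)\<^sup>2)"
    unfolding Hs_norm_def using I0 by simp
  finally show "(\<integral>\<^sup>+x. ennreal ((jbr x powr s * cmod (f x))\<^sup>2) \<partial>lborel) = ennreal ((Hs_norm s f)\<^sup>2)" .
qed

lemma T_integrand_measurable:
  assumes [measurable]: "f1 \<in> borel_measurable borel" "f2 \<in> borel_measurable borel" "f3 \<in> borel_measurable borel"
  shows "(\<lambda>p. T_integrand \<sigma> f1 f2 f3 (fst p) (snd p)) \<in> borel_measurable (lborel \<Otimes>\<^sub>M (lborel \<Otimes>\<^sub>M lborel))"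
  unfolding T_integrand_def Phi_def case_prod_beta by measurable



lemma main_fixed:
  fixes s \<epsilon> \<sigma> C :: real and f1 f2 f3 :: "real \<Rightarrow> complex"
  assumes s: "0 \<le> s" and e0: "0 < \<epsilon>" and e2: "\<epsilon> \<le> 2 * s" and e1: "\<epsilon> < 1"
    and s0: "0 < \<sigma>" and s1: "\<sigma> < 1" and se: "1 + \<epsilon> < 2*\<sigma>"
    and C_def: "C = CW s \<epsilon> * (2 * CG \<sigma> \<epsilon>)" and Cpos: "0 < C"
    and H1: "Hs_space s f1" and H2: "Hs_space s f2" and H3: "Hs_space s f3"
  shows "(AE \<xi> in lborel. integrable lborel (T_integrand \<sigma> f1 f2 f3 \<xi>)) \<and>
         Hs_space (s + \<epsilon>) (T_hat \<sigma> f1 f2 f3) \<and>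
         Hs_norm (s + \<epsilon>) (T_hat \<sigma> f1 f2 f3) \<le> C * Hs_norm s f1 * Hs_norm s f2 * Hs_norm s f3"
proof -
  note [measurable] = Hs_facts(1)[OF H1] Hs_facts(1)[OF H2] Hs_facts(1)[OF H3]
  define G1 where "G1 t = jbr t powr s * cmod (f1 t)" for t
  define G2 where "G2 t = jbr t powr s * cmod (f2 t)" for t
  define G3 where "G3 t = jbr t powr s * cmod (f3 t)" for t
  have [measurable]: "G1 \<in> borel_measurable borel" unfolding G1_def[abs_def] by measurable
  have [measurable]: "G2 \<in> borel_measurable borel" unfolding G2_def[abs_def] by measurable
  have [measurable]: "G3 \<in> borel_measurable borel" unfolding G3_def[abs_def] by measurable
  have Gnn: "\<And>t. 0 \<le> G1 t" "\<And>t. 0 \<le> G2 t" "\<And>t. 0 \<le> G3 t"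
    unfolding G1_def G2_def G3_def by auto
  define n1 where "n1 = Hs_norm s f1"
  define n2 where "n2 = Hs_norm s f2"
  define n3 where "n3 = Hs_norm s f3"
  have n0: "0 \<le> n1" "0 \<le> n2" "0 \<le> n3" unfolding n1_def n2_def n3_def Hs_norm_def by auto
  have N1: "(\<integral>\<^sup>+x. ennreal ((G1 x)\<^sup>2) \<partial>lborel) = ennreal (n1\<^sup>2)"
    unfolding G1_def n1_def by (rule Hs_facts(2)[OF H1])
  have N2: "(\<integral>\<^sup>+x. ennreal ((G2 x)\<^sup>2) \<partial>lborel) = ennreal (n2\<^sup>2)"
    unfolding G2_def n2_def by (rule Hs_facts(2)[OF H2])
  have N3: "(\<integral>\<^sup>+x. ennreal ((G3 x)\<^sup>2) \<partial>lborel) = ennreal (n3\<^sup>2)"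
    unfolding G3_def n3_def by (rule Hs_facts(2)[OF H3])
  define R where "R = C\<^sup>2 * (n1\<^sup>2 * n2\<^sup>2 * n3\<^sup>2)"
  have R0: "0 \<le> R" unfolding R_def by simp
  define Q where "Q \<xi> = (\<integral>\<^sup>+p. ennreal (Kr \<sigma> s \<epsilon> \<xi> (fst p) (snd p) * G1 (fst p) * G2 (\<xi> - fst p - snd p) * G3 (snd p)) \<partial>(lborel \<Otimes>\<^sub>M lborel))" for \<xi>
  define Tp where "Tp \<xi> = (\<integral>\<^sup>+p. ennreal (norm (T_integrand \<sigma> f1 f2 f3 \<xi> p)) \<partial>lborel)" for \<xi>
  have Tm: "(\<lambda>p. T_integrand \<sigma> f1 f2 f3 (fst p) (snd p)) \<in> borel_measurable (lborel \<Otimes>\<^sub>M (lborel \<Otimes>\<^sub>M lborel))"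
    using Hs_facts(1)[OF H1] Hs_facts(1)[OF H2] Hs_facts(1)[OF H3] by (rule T_integrand_measurable)
  have Tm2: "T_integrand \<sigma> f1 f2 f3 \<xi> \<in> borel_measurable (lborel \<Otimes>\<^sub>M lborel)" for \<xi>
    using measurable_Pair2[OF Tm, of \<xi>] by simp
  have sf: "sigma_finite_measure (lborel \<Otimes>\<^sub>M lborel :: (real \<times> real) measure)"
    by (intro sigma_finite_pair_measure lborel.sigma_finite_measure_axioms)
  have TQ: "ennreal (jbr \<xi> powr (s + \<epsilon>)) * Tp \<xi> = Q \<xi>" for \<xi>
  proof -
    have "Tp \<xi> = (\<integral>\<^sup>+p. ennreal (norm (T_integrand \<sigma> f1 f2 f3 \<xi> p)) \<partial>(lborel \<Otimes>\<^sub>M lborel))"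
      unfolding Tp_def lborel_prod ..
    then have "ennreal (jbr \<xi> powr (s + \<epsilon>)) * Tp \<xi> =
        (\<integral>\<^sup>+p. ennreal (jbr \<xi> powr (s + \<epsilon>)) * ennreal (norm (T_integrand \<sigma> f1 f2 f3 \<xi> p)) \<partial>(lborel \<Otimes>\<^sub>M lborel))"
      using Tm2[of \<xi>] by (simp add: nn_integral_cmult)
    also have "\<dots> = Q \<xi>"
      unfolding Q_def
    proof (intro nn_integral_cong)
      fix p :: "real \<times> real"
      obtain x z where p: "p = (x, z)" by (cases p)
      show "ennreal (jbr \<xi> powr (s + \<epsilon>)) * ennreal (norm (T_integrand \<sigma> f1 f2 f3 \<xi> p)) =
          ennreal (Kr \<sigma> s \<epsilon> \<xi> (fst p) (snd p) * G1 (fst p) * G2 (\<xi> - fst p - snd p) * G3 (snd p))"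
        unfolding p G1_def G2_def G3_def using pw_identity[of \<xi> s \<epsilon> \<sigma> f1 f2 f3 x z]
        by (simp add: ennreal_mult[symmetric])
    qed
    finally show ?thesis .
  qed
  have Qm[measurable]: "Q \<in> borel_measurable lborel"
    unfolding Q_def[abs_def]
    by (rule sigma_finite_measure.borel_measurable_nn_integral[OF sf]) measurable
  have mainb: "(\<integral>\<^sup>+\<xi>. (Q \<xi>)\<^sup>2 \<partial>lborel) \<le> ennreal R"
  proof -
    have "(\<integral>\<^sup>+\<xi>. (Q \<xi>)\<^sup>2 \<partial>lborel) \<le> ennreal ((CW s \<epsilon> * (2 * CG \<sigma> \<epsilon>))\<^sup>2) *
      ((\<integral>\<^sup>+x. ennreal ((G1 x)\<^sup>2) \<partial>lborel) * (\<integral>\<^sup>+x. ennreal ((G2 x)\<^sup>2) \<partial>lborel) * (\<integral>\<^sup>+x. ennreal ((G3 x)\<^sup>2) \<partial>lborel))"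
      unfolding Q_def by (rule main_nn[OF s e0 e2 e1 s0 s1 se]) (use Gnn in auto)
    also have "\<dots> = ennreal R"
      unfolding N1 N2 N3 R_def C_def by (simp add: ennreal_mult[symmetric])
    finally show ?thesis .
  qed
  have finQ: "(\<integral>\<^sup>+\<xi>. (Q \<xi>)\<^sup>2 \<partial>lborel) \<noteq> \<infinity>"
    using neq_top_trans[OF ennreal_neq_top mainb] by simp
  have AEQ: "AE \<xi> in lborel. (Q \<xi>)\<^sup>2 \<noteq> \<infinity>"
    by (rule nn_integral_PInf_AE[OF _ finQ]) measurable
  have AEint: "AE \<xi> in lborel. integrable lborel (T_integrand \<sigma> f1 f2 f3 \<xi>)"
    using AEQ
  proof eventually_elim
    case (elim \<xi>)
    have "Q \<xi> \<noteq> \<infinity>"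
    proof
      assume "Q \<xi> = \<infinity>"
      then show False using elim by (simp add: power2_eq_square)
    qed
    then have "Tp \<xi> \<noteq> \<infinity>"
      using TQ[of \<xi>] jbr_pos[of \<xi>] by (auto simp: ennreal_mult_eq_top_iff)
    then have "(\<integral>\<^sup>+p. ennreal (norm (T_integrand \<sigma> f1 f2 f3 \<xi> p)) \<partial>lborel) < \<infinity>"
      unfolding Tp_def by (simp add: less_top)
    moreover have "T_integrand \<sigma> f1 f2 f3 \<xi> \<in> borel_measurable lborel"
      using Tm2[of \<xi>] by (simp add: lborel_prod)
    ultimately show ?case by (intro integrableI_bounded) auto
  qed
  have normb: "ennreal (cmod (T_hat \<sigma> f1 f2 f3 \<xi>)) \<le> Tp \<xi>" for \<xi>
  proof (cases "integrable lborel (T_integrand \<sigma> f1 f2 f3 \<xi>)")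
    case True
    then show ?thesis unfolding T_hat_def Tp_def by (rule integral_norm_bound_ennreal)
  next
    case False
    then show ?thesis unfolding T_hat_def Tp_def by (simp add: not_integrable_integral_eq)
  qed
  define Psi where "Psi \<xi> = jbr \<xi> powr (2 * (s + \<epsilon>)) * (cmod (T_hat \<sigma> f1 f2 f3 \<xi>))\<^sup>2" for \<xi>
  have Psi0: "0 \<le> Psi \<xi>" for \<xi> unfolding Psi_def by simp
  have That_m[measurable]: "T_hat \<sigma> f1 f2 f3 \<in> borel_measurable lborel"
  proof -
    have "(\<lambda>\<xi>. \<integral>p. T_integrand \<sigma> f1 f2 f3 \<xi> p \<partial>(lborel \<Otimes>\<^sub>M lborel)) \<in> borel_measurable lborel"
      by (rule sigma_finite_measure.borel_measurable_lebesgue_integral[OF sf]) (use Tm in \<open>simp add: case_prod_beta'\<close>)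
    then show ?thesis unfolding T_hat_def[abs_def] lborel_prod .
  qed
  have Psim[measurable]: "Psi \<in> borel_measurable lborel"
    unfolding Psi_def[abs_def] by measurable
  have PsiQ: "ennreal (Psi \<xi>) \<le> (Q \<xi>)\<^sup>2" for \<xi>
  proof -
    have sq: "(jbr \<xi> powr (s + \<epsilon>))\<^sup>2 = jbr \<xi> powr (2 * (s + \<epsilon>))"
    proof -
      have "(jbr \<xi> powr (s + \<epsilon>))\<^sup>2 = jbr \<xi> powr (s + \<epsilon>) * jbr \<xi> powr (s + \<epsilon>)" by (simp add: power2_eq_square)
      also have "\<dots> = jbr \<xi> powr ((s + \<epsilon>) + (s + \<epsilon>))" by (rule powr_add[symmetric])
      also have "(s + \<epsilon>) + (s + \<epsilon>) = 2 * (s + \<epsilon>)" by simp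
      finally show ?thesis .
    qed
    have "ennreal (Psi \<xi>) = (ennreal (jbr \<xi> powr (s + \<epsilon>)) * ennreal (cmod (T_hat \<sigma> f1 f2 f3 \<xi>)))\<^sup>2"
      unfolding Psi_def sq[symmetric]
      by (simp add: ennreal_mult[symmetric] ennreal_power power_mult_distrib)
    also have "\<dots> \<le> (ennreal (jbr \<xi> powr (s + \<epsilon>)) * Tp \<xi>)\<^sup>2"
      by (intro power_mono mult_left_mono normb) auto
    also have "\<dots> = (Q \<xi>)\<^sup>2" using TQ by simp
    finally show ?thesis .
  qed
  have intPsi: "(\<integral>\<^sup>+\<xi>. ennreal (Psi \<xi>) \<partial>lborel) \<le> ennreal R"
    using nn_integral_mono[of lborel "\<lambda>\<xi>. ennreal (Psi \<xi>)" "\<lambda>\<xi>. (Q \<xi>)\<^sup>2", OF PsiQ] mainb by (rule order_trans)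
  have Psi_int: "integrable lborel Psi"
  proof (rule integrableI_bounded)
    show "Psi \<in> borel_measurable lborel" by measurable
    have "(\<integral>\<^sup>+\<xi>. ennreal (norm (Psi \<xi>)) \<partial>lborel) = (\<integral>\<^sup>+\<xi>. ennreal (Psi \<xi>) \<partial>lborel)"
      using Psi0 by simp
    also have "\<dots> < \<infinity>" using neq_top_trans[OF ennreal_neq_top intPsi] by (simp add: less_top)
    finally show "(\<integral>\<^sup>+\<xi>. ennreal (norm (Psi \<xi>)) \<partial>lborel) < \<infinity>" .
  qed
  have HS: "Hs_space (s + \<epsilon>) (T_hat \<sigma> f1 f2 f3)"
    unfolding Hs_space_def using Psi_int That_m unfolding Psi_def[abs_def] by simp
  have intle: "(\<integral>\<xi>. Psi \<xi> \<partial>lborel) \<le> R"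
  proof -
    have "(\<integral>\<xi>. Psi \<xi> \<partial>lborel) = enn2real (\<integral>\<^sup>+\<xi>. ennreal (Psi \<xi>) \<partial>lborel)"
      by (rule integral_eq_nn_integral) (auto simp: Psi0)
    also have "\<dots> \<le> R" by (rule enn2real_leI[OF R0 intPsi])
    finally show ?thesis .
  qed
  have "Hs_norm (s + \<epsilon>) (T_hat \<sigma> f1 f2 f3) = sqrt (\<integral>\<xi>. Psi \<xi> \<partial>lborel)"
    unfolding Hs_norm_def Psi_def ..
  also have "\<dots> \<le> sqrt R" using intle by simp
  also have "sqrt R = C * n1 * n2 * n3"
    unfolding R_def using Cpos n0 by (simp add: real_sqrt_mult)
  finally have "Hs_norm (s + \<epsilon>) (T_hat \<sigma> f1 f2 f3) \<le> C * Hs_norm s f1 * Hs_norm s f2 * Hs_norm s f3"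
    unfolding n1_def n2_def n3_def .
  with AEint HS show ?thesis by blast
qed



theorem lemma7:
  fixes s \<epsilon> :: real
  assumes "s > 0" and "0 < \<epsilon>" and "\<epsilon> < min (2 * s) 1"
  shows "\<exists>\<sigma>::real. 0 < \<sigma> \<and> \<sigma> < 1 \<and> (\<exists>C::real. C > 0 \<and>
           (\<forall>f1 f2 f3. Hs_space s f1 \<and> Hs_space s f2 \<and> Hs_space s f3 \<longrightarrow>
              (AE \<xi> in lborel. integrable lborel (T_integrand \<sigma> f1 f2 f3 \<xi>)) \<and>
              Hs_space (s + \<epsilon>) (T_hat \<sigma> f1 f2 f3) \<and>
              Hs_norm (s + \<epsilon>) (T_hat \<sigma> f1 f2 f3)
                \<le> C * Hs_norm s f1 * Hs_norm s f2 * Hs_norm s f3))"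
proof -
  define \<sigma> where "\<sigma> = (3 + \<epsilon>) / 4"
  have e1: "\<epsilon> < 1" and e2: "\<epsilon> \<le> 2 * s" using assms(3) by auto
  have s0: "0 < \<sigma>" and s1: "\<sigma> < 1" and se: "1 + \<epsilon> < 2 * \<sigma>"
    unfolding \<sigma>_def using assms(2) e1 by auto
  define C where "C = CW s \<epsilon> * (2 * CG \<sigma> \<epsilon>)"
  have "0 < CW s \<epsilon>" unfolding CW_def by simp
  moreover have "0 < CG \<sigma> \<epsilon>" unfolding CG_def using s1 se by (simp add: add_pos_nonneg)
  ultimately have Cpos: "0 < C" unfolding C_def by simp
  have "\<forall>f1 f2 f3. Hs_space s f1 \<and> Hs_space s f2 \<and> Hs_space s f3 \<longrightarrow>
              (AE \<xi> in lborel. integrable lborel (T_integrand \<sigma> f1 f2 f3 \<xi>)) \<and>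
              Hs_space (s + \<epsilon>) (T_hat \<sigma> f1 f2 f3) \<and>
              Hs_norm (s + \<epsilon>) (T_hat \<sigma> f1 f2 f3)
                \<le> C * Hs_norm s f1 * Hs_norm s f2 * Hs_norm s f3"
    using main_fixed[OF less_imp_le[OF assms(1)] assms(2) e2 e1 s0 s1 se C_def Cpos] by blast
  then show ?thesis using s0 s1 Cpos by blast
qed

end
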